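(* Let $p$ be a prime and $G=S^1\times C_p$. Then $G$ is not a BU-group of type I: there exist fixed-point-free orthogonal $G$-representations $V,W$ with $\dim V>\dim W$ and a $G$-map $f:S(V)\to S(W)$. (For instance, $V=2V_{1,0}\oplus 2V_{1,1}$ and $W=2V_{p,0}\oplus V_{0,1}$.)
   Context: Let $a$ be a generator of $C_p$ and $\xi_p=e^{2\pi\sqrt{-1}/p}$. For $k\in\mathbb{Z}$ and $l\in\mathbb{Z}/p$, $V_{k,l}$ is the $1$-dimensional unitary $G$-representation on $\mathbb{C}$ with $(t,a^j)\cdot z=t^k\xi_p^{jl}z$ for $t\in S^1$, regarded as a real $2$-dimensional orthogonal representation. An orthogonal $G$-representation $V$ is fixed-point-free if $V^G=0$; $S(V)$ denotes its unit sphere; a $G$-map is a continuous $G$-equivariant map. $G$ is a BU-group of type I if for all fixed-point-free orthogonal $G$-representations $V,W$, the existence of a $G$-map $S(V)\to S(W)$ implies $\dim V\le\dim W$. *)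

theory Defs
  imports "HOL-Analysis.Analysis"
begin

text \<open>The group G = S^1 x C_p: pairs (t, j) with t a unit complex number and
  j < p standing for a^j; multiplication (t,j)(s,k) = (ts, (j+k) mod p).\<close>

definition Gcar :: "nat \<Rightarrow> (complex \<times> nat) set" where
  "Gcar p = {(t, j). cmod t = 1 \<and> j < p}"

definition Gmult :: "nat \<Rightarrow> complex \<times> nat \<Rightarrow> complex \<times> nat \<Rightarrow> complex \<times> nat" where
  "Gmult p g h = (fst g * fst h, (snd g + snd h) mod p)"

definition Gone :: "complex \<times> nat" where
  "Gone = (1, 0)"

definition Rn :: "nat \<Rightarrow> (nat \<Rightarrow> real) set" where
  "Rn n = {x. \<forall>i\<ge>n. x i = 0}"

definition inner_n :: "nat \<Rightarrow> (nat \<Rightarrow> real) \<Rightarrow> (nat \<Rightarrow> real) \<Rightarrow> real" where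
  "inner_n n x y = (\<Sum>i<n. x i * y i)"

definition sphere_n :: "nat \<Rightarrow> (nat \<Rightarrow> real) set" where
  "sphere_n n = {x \<in> Rn n. inner_n n x x = 1}"

definition orth_rep :: "nat \<Rightarrow> nat \<Rightarrow> (complex \<times> nat \<Rightarrow> (nat \<Rightarrow> real) \<Rightarrow> (nat \<Rightarrow> real)) \<Rightarrow> bool" where
  "orth_rep p n \<rho> \<longleftrightarrow>
     (\<forall>g\<in>Gcar p. \<forall>x\<in>Rn n. \<rho> g x \<in> Rn n) \<and>
     (\<forall>g\<in>Gcar p. \<forall>x\<in>Rn n. \<forall>y\<in>Rn n. \<forall>a b::real.
         \<rho> g (\<lambda>i. a * x i + b * y i) = (\<lambda>i. a * \<rho> g x i + b * \<rho> g y i)) \<and>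
     (\<forall>g\<in>Gcar p. \<forall>x\<in>Rn n. \<forall>y\<in>Rn n. inner_n n (\<rho> g x) (\<rho> g y) = inner_n n x y) \<and>
     (\<forall>x\<in>Rn n. \<rho> Gone x = x) \<and>
     (\<forall>g\<in>Gcar p. \<forall>h\<in>Gcar p. \<forall>x\<in>Rn n. \<rho> (Gmult p g h) x = \<rho> g (\<rho> h x)) \<and>
     continuous_on (Gcar p \<times> Rn n) (\<lambda>(g, x). \<rho> g x)"

definition fixed_point_free :: "nat \<Rightarrow> nat \<Rightarrow> (complex \<times> nat \<Rightarrow> (nat \<Rightarrow> real) \<Rightarrow> (nat \<Rightarrow> real)) \<Rightarrow> bool" where
  "fixed_point_free p n \<rho> \<longleftrightarrow> (\<forall>x\<in>Rn n. (\<forall>g\<in>Gcar p. \<rho> g x = x) \<longrightarrow> x = (\<lambda>i. 0))"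

definition G_map :: "nat \<Rightarrow> nat \<Rightarrow> (complex \<times> nat \<Rightarrow> (nat \<Rightarrow> real) \<Rightarrow> (nat \<Rightarrow> real)) \<Rightarrow>
    nat \<Rightarrow> (complex \<times> nat \<Rightarrow> (nat \<Rightarrow> real) \<Rightarrow> (nat \<Rightarrow> real)) \<Rightarrow>
    ((nat \<Rightarrow> real) \<Rightarrow> (nat \<Rightarrow> real)) \<Rightarrow> bool" where
  "G_map p n \<rho> m \<sigma> f \<longleftrightarrow>
     continuous_on (sphere_n n) f \<and> f ` sphere_n n \<subseteq> sphere_n m \<and>
     (\<forall>g\<in>Gcar p. \<forall>x\<in>sphere_n n. f (\<rho> g x) = \<sigma> g (f x))"

definition BU_group_type_I :: "nat \<Rightarrow> bool" where
  "BU_group_type_I p \<longleftrightarrow>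
     (\<forall>n m \<rho> \<sigma>. orth_rep p n \<rho> \<and> orth_rep p m \<sigma> \<and>
        fixed_point_free p n \<rho> \<and> fixed_point_free p m \<sigma> \<and>
        (\<exists>f. G_map p n \<rho> m \<sigma> f) \<longrightarrow> n \<le> m)"

end

theory Submission
  imports Defs
begin

definition cc :: "(nat \<Rightarrow> real) \<Rightarrow> nat \<Rightarrow> complex" where
  "cc x k = Complex (x (2*k)) (x (2*k+1))"

definition enc :: "nat \<Rightarrow> (nat \<Rightarrow> complex) \<Rightarrow> nat \<Rightarrow> real" where
  "enc n c = (\<lambda>i. if i < 2*n then (if even i then Re (c (i div 2)) else Im (c (i div 2))) else 0)"

definition rep :: "(complex \<times> nat \<Rightarrow> nat \<Rightarrow> complex) \<Rightarrow> nat \<Rightarrow> complex \<times> nat \<Rightarrow> (nat \<Rightarrow> real) \<Rightarrow> nat \<Rightarrow> real" where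
  "rep ch n g x = enc n (\<lambda>k. ch g k * cc x k)"

lemma sum_pairs: fixes n :: nat shows "(\<Sum>i<2*n. f i) = (\<Sum>k<n. f (2*k) + f (2*k+1))"
  by (induction n) (auto simp: ac_simps)

lemma inner_cc: "inner_n (2*n) x y = (\<Sum>k<n. Re (cnj (cc x k) * cc y k))"
  unfolding inner_n_def sum_pairs cc_def by simp

lemma cc_enc: "k < n \<Longrightarrow> cc (enc n c) k = c k"
  unfolding cc_def enc_def by (simp add: complex_eq_iff)

lemma enc_cc: assumes "x \<in> Rn (2*n)" shows "enc n (cc x) = x"
proof
  fix i
  show "enc n (cc x) i = x i"
  proof (cases "i < 2*n")
    case True
    then show ?thesis
      unfolding enc_def cc_def
      by (cases "even i") (auto elim!: evenE oddE)
  next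
    case False
    then show ?thesis using assms unfolding enc_def Rn_def by auto
  qed
qed

lemma enc_Rn: "enc n c \<in> Rn (2*n)"
  unfolding enc_def Rn_def by auto

lemma enc_cong: "(\<And>k. k < n \<Longrightarrow> c k = d k) \<Longrightarrow> enc n c = enc n d"
  unfolding enc_def by (auto intro!: ext)

lemma cc_lin: "cc (\<lambda>i. a * x i + b * y i) k = of_real a * cc x k + of_real b * cc y k"
  unfolding cc_def by (simp add: complex_eq_iff)

lemma enc_lin: "enc n (\<lambda>k. of_real a * c k + of_real b * d k) = (\<lambda>i. a * enc n c i + b * enc n d i)"
  unfolding enc_def by (auto intro!: ext)

lemma inner_enc: "inner_n (2*n) (enc n c) (enc n c) = (\<Sum>k<n. (cmod (c k))^2)"
  unfolding inner_cc
  by (intro sum.cong refl) (simp add: cc_enc complex_norm_square[symmetric] mult.commute)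

lemma cc_cont: "continuous_on S (\<lambda>x. cc x k)"
  unfolding cc_def Complex_eq
  by (intro continuous_intros continuous_on_compose2[OF continuous_on_product_coordinates]) auto


lemma cc_rep: "k < n \<Longrightarrow> cc (rep ch n g x) k = ch g k * cc x k"
  unfolding rep_def by (simp add: cc_enc)

lemma rep_orth:
  assumes unit: "\<And>g k. g \<in> Gcar p \<Longrightarrow> cmod (ch g k) = 1"
    and one: "\<And>k. ch Gone k = 1"
    and mult: "\<And>g h k. g \<in> Gcar p \<Longrightarrow> h \<in> Gcar p \<Longrightarrow> ch (Gmult p g h) k = ch g k * ch h k"
    and cont: "\<And>k. continuous_on (Gcar p) (\<lambda>g. ch g k)"
  shows "orth_rep p (2*n) (rep ch n)"
  unfolding orth_rep_def
proof (intro conjI ballI allI)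
  fix g x assume "g \<in> Gcar p" "x \<in> Rn (2*n)"
  show "rep ch n g x \<in> Rn (2*n)" unfolding rep_def by (rule enc_Rn)
next
  fix g x y and a b :: real
  have "rep ch n g (\<lambda>i. a * x i + b * y i) = enc n (\<lambda>k. of_real a * (ch g k * cc x k) + of_real b * (ch g k * cc y k))"
    unfolding rep_def cc_lin by (intro enc_cong) (simp add: algebra_simps)
  then show "rep ch n g (\<lambda>i. a * x i + b * y i) = (\<lambda>i. a * rep ch n g x i + b * rep ch n g y i)"
    unfolding enc_lin rep_def by simp
next
  fix g x y assume g: "g \<in> Gcar p"
  have "Re (cnj (ch g k * cc x k) * (ch g k * cc y k)) = Re (cnj (cc x k) * cc y k)" for k
  proof -
    have "cnj (ch g k * cc x k) * (ch g k * cc y k) = (ch g k * cnj (ch g k)) * (cnj (cc x k) * cc y k)"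
      by (simp add: algebra_simps)
    also have "ch g k * cnj (ch g k) = 1"
      using unit[OF g, of k] by (simp add: complex_norm_square[symmetric])
    finally have "cnj (ch g k * cc x k) * (ch g k * cc y k) = cnj (cc x k) * cc y k" by simp
    then show ?thesis by (simp only:)
  qed
  then show "inner_n (2*n) (rep ch n g x) (rep ch n g y) = inner_n (2*n) x y"
    unfolding inner_cc by (simp add: cc_rep)
next
  fix x assume "x \<in> Rn (2*n)"
  then show "rep ch n Gone x = x" unfolding rep_def one by (simp add: enc_cc)
next
  fix g h x assume "g \<in> Gcar p" "h \<in> Gcar p"
  then show "rep ch n (Gmult p g h) x = rep ch n g (rep ch n h x)"
    unfolding rep_def[of _ _ g] by (auto simp: rep_def mult cc_enc intro!: enc_cong)
next
  show "continuous_on (Gcar p \<times> Rn (2*n)) (\<lambda>(g, x). rep ch n g x)"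
  proof (intro continuous_on_coordinatewise_then_product)
    fix i
    have c1: "continuous_on (Gcar p \<times> Rn (2*n)) (\<lambda>z. ch (fst z) k)" for k
      by (intro continuous_intros continuous_on_compose2[OF cont[of k]]) auto
    have c2: "continuous_on (Gcar p \<times> Rn (2*n)) (\<lambda>z. cc (snd z) k)" for k
      by (intro continuous_intros continuous_on_compose2[OF cc_cont[of UNIV k]]) auto
    have "continuous_on (Gcar p \<times> Rn (2*n)) (\<lambda>z. rep ch n (fst z) (snd z) i)"
      unfolding rep_def enc_def
      by (cases "i < 2*n"; cases "even i") (auto intro!: continuous_intros c1 c2)
    then show "continuous_on (Gcar p \<times> Rn (2*n)) (\<lambda>z. (case z of (g, x) \<Rightarrow> rep ch n g x) i)"
      by (simp add: case_prod_beta)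
  qed
qed

lemma rep_fpf:
  assumes "\<And>k. k < n \<Longrightarrow> \<exists>g\<in>Gcar p. ch g k \<noteq> 1"
  shows "fixed_point_free p (2*n) (rep ch n)"
  unfolding fixed_point_free_def
proof (intro ballI impI ext)
  fix x i assume x: "x \<in> Rn (2*n)" and fx: "\<forall>g\<in>Gcar p. rep ch n g x = x"
  have z: "cc x k = 0" if kn: "k < n" for k
  proof -
    obtain g where g: "g \<in> Gcar p" "ch g k \<noteq> 1" using assms[OF kn] by blast
    have "ch g k * cc x k = cc x k" using cc_rep[OF kn, of ch g x] fx g by simp
    then have "(ch g k - 1) * cc x k = 0" by (simp add: algebra_simps)
    then show ?thesis using g by simp
  qed
  show "x i = 0"
  proof (cases "i < 2*n")
    case True
    then have "cc x (i div 2) = 0" by (intro z) auto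
    then show ?thesis unfolding cc_def
      by (cases "even i") (auto elim!: evenE oddE simp: complex_eq_iff)
  next
    case False then show ?thesis using x unfolding Rn_def by auto
  qed
qed


definition om :: "nat \<Rightarrow> complex" where "om p = cis (2*pi/p)"

lemma om_pow_p: "p > 0 \<Longrightarrow> om p ^ p = 1"
  unfolding om_def by (simp add: Complex.DeMoivre)

lemma om_mod: assumes "p > 0" shows "om p ^ (a mod p) = om p ^ a"
proof -
  have "om p ^ a = om p ^ (a div p * p + a mod p)" by simp
  also have "\<dots> = (om p ^ p) ^ (a div p) * om p ^ (a mod p)"
    by (simp only: power_add mult.commute[of "a div p" p] power_mult)
  also have "\<dots> = om p ^ (a mod p)" using om_pow_p[OF assms] by simp
  finally show ?thesis by simp
qed

lemma om_norm1 [simp]: "cmod (om p) = 1"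
  unfolding om_def by simp

lemma om_norm: "cmod (om p ^ j) = 1"
  unfolding om_def by (simp add: norm_power)

lemma om_ne1: assumes "p \<ge> 2" shows "om p \<noteq> 1"
proof
  assume "om p = 1"
  then have "cos (2*pi/p) = 1" unfolding om_def by (metis cis.sel(1) one_complex.sel(1))
  moreover have "0 < 2*pi/p" "2*pi/p \<le> pi" using assms by (auto simp: field_simps)
  ultimately show False by (smt (verit, best) arccos_1 arccos_unique)
qed

definition chV :: "nat \<Rightarrow> complex \<times> nat \<Rightarrow> nat \<Rightarrow> complex" where
  "chV p g k = (if k < 2 then fst g else fst g * om p ^ snd g)"

definition chW :: "nat \<Rightarrow> complex \<times> nat \<Rightarrow> nat \<Rightarrow> complex" where
  "chW p g k = (if k < 2 then fst g ^ p else om p ^ snd g)"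

lemma cont_om: "continuous_on S (\<lambda>g::complex\<times>nat. om p ^ snd g)"
  by (rule continuous_on_compose2[OF Topological_Spaces.continuous_on_discrete[of UNIV "\<lambda>j. om p ^ j"]]) (auto intro: continuous_intros)

lemma orthV: assumes "p > 0" shows "orth_rep p 8 (rep (chV p) 4)"
proof -
  have "orth_rep p (2*4) (rep (chV p) 4)"
  proof (rule rep_orth)
    fix g k assume "g \<in> Gcar p" then show "cmod (chV p g k) = 1"
      unfolding chV_def Gcar_def by (auto simp: norm_mult om_norm)
  next
    fix k show "chV p Gone k = 1" unfolding chV_def Gone_def by simp
  next
    fix g h k show "chV p (Gmult p g h) k = chV p g k * chV p h k"
      unfolding chV_def Gmult_def using om_mod[OF assms] by (simp add: power_add algebra_simps)
  next
    fix k show "continuous_on (Gcar p) (\<lambda>g. chV p g k)"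
      unfolding chV_def by (cases "k < 2") (auto intro!: continuous_intros cont_om)
  qed
  then show ?thesis by simp
qed

lemma orthW: assumes "p > 0" shows "orth_rep p 6 (rep (chW p) 3)"
proof -
  have "orth_rep p (2*3) (rep (chW p) 3)"
  proof (rule rep_orth)
    fix g k assume "g \<in> Gcar p" then show "cmod (chW p g k) = 1"
      unfolding chW_def Gcar_def by (auto simp: norm_power om_norm)
  next
    fix k show "chW p Gone k = 1" unfolding chW_def Gone_def by simp
  next
    fix g h k show "chW p (Gmult p g h) k = chW p g k * chW p h k"
      unfolding chW_def Gmult_def using om_mod[OF assms] by (simp add: power_add power_mult_distrib)
  next
    fix k show "continuous_on (Gcar p) (\<lambda>g. chW p g k)"
      unfolding chW_def by (cases "k < 2") (auto intro!: continuous_intros cont_om)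
  qed
  then show ?thesis by simp
qed

lemma fpfV: assumes "p > 0" shows "fixed_point_free p 8 (rep (chV p) 4)"
proof -
  have "fixed_point_free p (2*4) (rep (chV p) 4)"
  proof (rule rep_fpf)
    fix k :: nat
    have "(-1, 0) \<in> Gcar p" using assms unfolding Gcar_def by auto
    moreover have "chV p (-1, 0) k \<noteq> 1" unfolding chV_def by simp
    ultimately show "\<exists>g\<in>Gcar p. chV p g k \<noteq> 1" by blast
  qed
  then show ?thesis by simp
qed

lemma fpfW: assumes "p \<ge> 2" shows "fixed_point_free p 6 (rep (chW p) 3)"
proof -
  have "fixed_point_free p (2*3) (rep (chW p) 3)"
  proof (rule rep_fpf)
    fix k :: nat
    show "\<exists>g\<in>Gcar p. chW p g k \<noteq> 1"
    proof (cases "k < 2")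
      case True
      have "(cis (pi/p), 0) \<in> Gcar p" using assms unfolding Gcar_def by auto
      moreover have "cis (pi/p) ^ p = -1" using assms by (simp add: Complex.DeMoivre)
      ultimately show ?thesis using True unfolding chW_def by (intro bexI[of _ "(cis (pi/p), 0)"]) auto
    next
      case False
      have "(1, 1) \<in> Gcar p" using assms unfolding Gcar_def by auto
      then show ?thesis using False om_ne1[OF assms] unfolding chW_def by (intro bexI[of _ "(1, 1)"]) auto
    qed
  qed
  then show ?thesis by simp
qed


definition Fm :: "nat \<Rightarrow> (nat \<Rightarrow> real) \<Rightarrow> nat \<Rightarrow> complex" where
  "Fm p x k = (if k = 0 then cc x 0 ^ p + cc x 2 ^ p
     else if k = 1 then cc x 1 ^ p - (- cc x 3) ^ p
     else cnj (cc x 0) * cc x 2 + cnj (cc x 1) * cc x 3)"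

definition Nm :: "nat \<Rightarrow> (nat \<Rightarrow> real) \<Rightarrow> real" where
  "Nm p x = sqrt ((cmod (Fm p x 0))^2 + (cmod (Fm p x 1))^2 + (cmod (Fm p x 2))^2)"

definition fm :: "nat \<Rightarrow> (nat \<Rightarrow> real) \<Rightarrow> nat \<Rightarrow> real" where
  "fm p x = enc 3 (\<lambda>k. Fm p x k / of_real (Nm p x))"

lemma cnj_pow_mult: "cnj a ^ p * a ^ p = of_real ((cmod a ^ 2) ^ p)"
proof -
  have "cnj a ^ p * a ^ p = (a * cnj a) ^ p" by (simp add: power_mult_distrib mult.commute)
  also have "\<dots> = of_real ((cmod a ^ 2) ^ p)" by (simp add: complex_norm_square[symmetric])
  finally show ?thesis .
qed

lemma alg:
  fixes a b c d :: complex
  assumes p: "p > 0" and h1: "a^p + c^p = 0" and h2: "b^p - (-d)^p = 0"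
    and h3: "cnj a * c + cnj b * d = 0"
  shows "a = 0 \<and> b = 0 \<and> c = 0 \<and> d = 0"
proof -
  have "cnj a * c = - (cnj b * d)" using h3 by (simp only: eq_neg_iff_add_eq_0)
  then have "cnj a * c = cnj b * (-d)" by simp
  then have "(cnj a * c)^p = (cnj b * (-d))^p" by simp
  then have "cnj a ^p * c^p = cnj b^p * (-d)^p" by (simp only: power_mult_distrib)
  moreover have "c^p = - (a^p)" using h1 by (metis add.commute eq_neg_iff_add_eq_0)
  moreover have "(-d)^p = b^p" using h2 by simp
  ultimately have "- (cnj a ^p * a^p) = cnj b^p * b^p" by simp
  then have "complex_of_real (- ((cmod a ^ 2) ^ p)) = of_real ((cmod b ^ 2) ^ p)"
    by (simp add: cnj_pow_mult)
  then have e: "- ((cmod a ^ 2) ^ p) = (cmod b ^ 2) ^ p" using of_real_eq_iff by blast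
  have "(cmod a ^ 2) ^ p \<ge> 0" "(cmod b ^ 2) ^ p \<ge> 0" by auto
  then have "(cmod a ^ 2) ^ p = 0" "(cmod b ^ 2) ^ p = 0" using e by linarith+
  then have ab: "a = 0" "b = 0" using p by auto
  then have "c = 0" using h1 p by (simp add: zero_power)
  moreover have "d = 0" using h2 ab p by (simp add: zero_power)
  ultimately show ?thesis using ab by simp
qed

lemma inner_self_cc: "inner_n (2*n) x x = (\<Sum>k<n. (cmod (cc x k))^2)"
  unfolding inner_cc by (intro sum.cong refl) (metis Re_complex_of_real complex_norm_square mult.commute)

lemma Nm_pos: assumes p: "p > 0" and x: "x \<in> sphere_n 8" shows "Nm p x > 0"
proof (rule ccontr)
  assume "\<not> Nm p x > 0"
  define S where "S = (cmod (Fm p x 0))^2 + (cmod (Fm p x 1))^2 + (cmod (Fm p x 2))^2"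
  have s0: "(cmod (Fm p x 0))^2 \<ge> 0" "(cmod (Fm p x 1))^2 \<ge> 0" "(cmod (Fm p x 2))^2 \<ge> 0" by auto
  then have "S \<ge> 0" unfolding S_def by linarith
  moreover have "\<not> sqrt S > 0" using \<open>\<not> Nm p x > 0\<close> unfolding Nm_def S_def .
  ultimately have "S = 0" by (simp add: not_less)
  then have "(cmod (Fm p x 0))^2 = 0" "(cmod (Fm p x 1))^2 = 0" "(cmod (Fm p x 2))^2 = 0"
    using s0 unfolding S_def by linarith+
  then have "Fm p x 0 = 0" "Fm p x 1 = 0" "Fm p x 2 = 0" by simp_all
  then have h: "cc x 0 ^ p + cc x 2 ^ p = 0" "cc x 1 ^ p - (- cc x 3)^p = 0"
      "cnj (cc x 0) * cc x 2 + cnj (cc x 1) * cc x 3 = 0"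
    unfolding Fm_def by simp_all
  have z: "cc x 0 = 0 \<and> cc x 1 = 0 \<and> cc x 2 = 0 \<and> cc x 3 = 0"
    by (rule alg[OF p h])
  have "inner_n (2*4) x x = 1" using x unfolding sphere_n_def by simp
  moreover have "{..<4::nat} = {0,1,2,3}" by auto
  ultimately show False using z unfolding inner_self_cc by simp
qed

lemma fm_sphere: assumes "p > 0" "x \<in> sphere_n 8" shows "fm p x \<in> sphere_n 6"
proof -
  have N: "Nm p x > 0" using Nm_pos assms by blast
  have "(\<Sum>k<3. (cmod (Fm p x k / of_real (Nm p x)))^2)
      = ((cmod (Fm p x 0))^2 + (cmod (Fm p x 1))^2 + (cmod (Fm p x 2))^2) / (Nm p x)^2"
  proof -
    have "{..<3::nat} = {0,1,2}" by auto
    then show ?thesis by (simp add: norm_divide power_divide add_divide_distrib)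
  qed
  also have "\<dots> = 1" using N unfolding Nm_def by simp
  finally have "inner_n (2*3) (fm p x) (fm p x) = 1" unfolding fm_def inner_enc .
  moreover have "fm p x \<in> Rn (2*3)" unfolding fm_def by (rule enc_Rn)
  ultimately show ?thesis unfolding sphere_n_def by simp
qed


lemma omjp: "p > 0 \<Longrightarrow> (om p ^ j) ^ p = 1"
  by (metis om_pow_p power_mult mult.commute power_one)

lemma chW_norm: "g \<in> Gcar p \<Longrightarrow> cmod (chW p g k) = 1"
  unfolding chW_def Gcar_def by (auto simp: norm_power om_norm)

lemma F_equiv:
  assumes p: "p > 0" and g: "g \<in> Gcar p"
  shows "Fm p (rep (chV p) 4 g x) k = chW p g k * Fm p x k"
proof -
  obtain t j where gt: "g = (t, j)" and t: "cmod t = 1" using g unfolding Gcar_def by auto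
  define u where "u = om p ^ j"
  have c: "cc (rep (chV p) 4 g x) i = (if i < 2 then t else t * u) * cc x i" if "i < 4" for i
    using cc_rep[OF that, of "chV p" g x] unfolding chV_def gt u_def by simp
  have tt: "cnj t * t = 1" using t by (simp add: complex_norm_square[symmetric] mult.commute)
  have w: "u ^ p = 1" unfolding u_def using omjp[OF p] .
  have W: "chW p g k = (if k < 2 then t ^ p else u)" unfolding chW_def gt u_def by simp
  show ?thesis
  proof (cases "k = 0")
    case True
    have "(t * cc x 0) ^ p + (t * u * cc x 2) ^ p = t ^ p * (cc x 0 ^ p + cc x 2 ^ p)"
      by (simp add: power_mult_distrib w distrib_left)
    then show ?thesis using True unfolding Fm_def W by (simp add: c)
  next
    case False
    note k0 = this
    show ?thesis
    proof (cases "k = 1")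
      case True
      have "- (t * u * cc x 3) = t * u * (- cc x 3)" by simp
      then have "(t * cc x 1) ^ p - (- (t * u * cc x 3)) ^ p = t ^ p * (cc x 1 ^ p - (- cc x 3) ^ p)"
        by (simp only: power_mult_distrib w) (simp add: right_diff_distrib)
      then show ?thesis using True unfolding Fm_def W by (simp add: c)
    next
      case False
      have e1: "cnj (t * cc x 0) * (t * u * cc x 2) = (cnj t * t) * u * (cnj (cc x 0) * cc x 2)"
        by (simp add: algebra_simps)
      have e2: "cnj (t * cc x 1) * (t * u * cc x 3) = (cnj t * t) * u * (cnj (cc x 1) * cc x 3)"
        by (simp add: algebra_simps)
      have "cnj (t * cc x 0) * (t * u * cc x 2) + cnj (t * cc x 1) * (t * u * cc x 3)
          = u * (cnj (cc x 0) * cc x 2 + cnj (cc x 1) * cc x 3)"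
        unfolding e1 e2 tt by (simp add: distrib_left)
      moreover have "\<not> k < 2" using k0 False by auto
      ultimately show ?thesis using k0 False unfolding Fm_def W by (simp add: c)
    qed
  qed
qed

lemma Nm_equiv:
  assumes p: "p > 0" and g: "g \<in> Gcar p"
  shows "Nm p (rep (chV p) 4 g x) = Nm p x"
  unfolding Nm_def F_equiv[OF assms] norm_mult chW_norm[OF g] by simp

lemma fm_equiv:
  assumes p: "p > 0" and g: "g \<in> Gcar p"
  shows "fm p (rep (chV p) 4 g x) = rep (chW p) 3 g (fm p x)"
  unfolding fm_def rep_def[of "chW p"] F_equiv[OF assms] Nm_equiv[OF assms]
  by (intro enc_cong) (simp add: cc_enc)

lemma F_cont: "continuous_on S (\<lambda>x. Fm p x k)"
  unfolding Fm_def
  by (cases "k = 0"; cases "k = 1") (auto intro!: continuous_intros cc_cont)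

lemma fm_cont: assumes p: "p > 0" shows "continuous_on (sphere_n 8) (fm p)"
proof (rule continuous_on_coordinatewise_then_product)
  fix i
  have q: "continuous_on (sphere_n 8) (\<lambda>x. Fm p x k / of_real (Nm p x))" for k
  proof -
    have nc: "continuous_on (sphere_n 8) (\<lambda>x. Nm p x)" unfolding Nm_def
      by (intro continuous_intros F_cont)
    show ?thesis using Nm_pos[OF p]
      by (intro continuous_intros F_cont nc) (metis less_irrefl of_real_eq_0_iff)
  qed
  show "continuous_on (sphere_n 8) (\<lambda>x. fm p x i)"
    unfolding fm_def enc_def
    by (cases "i < 2*3"; cases "even i"; simp only: if_True if_False;
        intro continuous_on_Re[OF q] continuous_on_Im[OF q] continuous_on_const)
qed


theorem proposition4p5:
  fixes p :: nat
  assumes "prime p"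
  shows "\<not> BU_group_type_I p \<and>
    (\<exists>n m \<rho> \<sigma> f. orth_rep p n \<rho> \<and> orth_rep p m \<sigma> \<and>
        fixed_point_free p n \<rho> \<and> fixed_point_free p m \<sigma> \<and>
        n > m \<and> G_map p n \<rho> m \<sigma> f)"
proof -
  have p2: "p \<ge> 2" using assms prime_ge_2_nat by blast
  then have p: "p > 0" by simp
  have G: "G_map p 8 (rep (chV p) 4) 6 (rep (chW p) 3) (fm p)"
    unfolding G_map_def using fm_cont[OF p] fm_sphere[OF p] fm_equiv[OF p] by blast
  have all: "orth_rep p 8 (rep (chV p) 4) \<and> orth_rep p 6 (rep (chW p) 3) \<and>
        fixed_point_free p 8 (rep (chV p) 4) \<and> fixed_point_free p 6 (rep (chW p) 3) \<and>
        (8::nat) > 6 \<and> G_map p 8 (rep (chV p) 4) 6 (rep (chW p) 3) (fm p)"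
    using orthV[OF p] orthW[OF p] fpfV[OF p] fpfW[OF p2] G by simp
  have "\<not> BU_group_type_I p"
  proof
    assume "BU_group_type_I p"
    then have "(8::nat) \<le> 6" unfolding BU_group_type_I_def using all by blast
    then show False by simp
  qed
  with all show ?thesis by blast
qed

end
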